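(* Let $R$ be an associative ring with identity and involution $*$, and let $a\in R^{\#}\cap R^{\dagger}$. Then $a\in R^{SEP}$ if and only if $a(a^{\#})^*a^{\dagger}a^{\#}$ is a projection, i.e. $a(a^{\#})^*a^{\dagger}a^{\#}\in PE(R)$.
   Context: An involution on $R$ is a map $x\mapsto x^*$ with $(x^* )^*=x$, $(x+y)^*=x^*+y^*$, $(xy)^*=y^*x^*$. An element $a$ is Moore–Penrose invertible if there is $b$ with $aba=a$, $bab=b$, $(ab)^*=ab$, $(ba)^*=ba$; such $b$ is unique, denoted $a^{\dagger}$, and $R^{\dagger}$ is the set of such $a$. An element $a$ is group invertible if there is $b$ with $aba=a$, $bab=b$, $ab=ba$; such $b$ is unique, denoted $a^{\#}$, and $R^{\#}$ is the set of such $a$. $PE(R)=\{e\in R: e^2=e=e^*\}$ is the set of projections. For $a\in R^{\#}\cap R^{\dagger}$: $a$ is EP if $a^{\#}=a^{\dagger}$; $a$ is a partial isometry if $a^*=a^{\dagger}$; $a$ is SEP (strongly EP) if $a^*=a^{\dagger}=a^{\#}$. $R^{SEP}$ denotes the set of SEP elements. *)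

theory Defs
  imports Main
begin

definition involution :: "('a::ring_1 \<Rightarrow> 'a) \<Rightarrow> bool" where
  "involution s \<longleftrightarrow> (\<forall>x. s (s x) = x) \<and> (\<forall>x y. s (x + y) = s x + s y)
     \<and> (\<forall>x y. s (x * y) = s y * s x)"

definition is_mp_inverse :: "('a::ring_1 \<Rightarrow> 'a) \<Rightarrow> 'a \<Rightarrow> 'a \<Rightarrow> bool" where
  "is_mp_inverse s a b \<longleftrightarrow> a * b * a = a \<and> b * a * b = b \<and> s (a * b) = a * b \<and> s (b * a) = b * a"

definition mp_invertible :: "('a::ring_1 \<Rightarrow> 'a) \<Rightarrow> 'a \<Rightarrow> bool" where
  "mp_invertible s a \<longleftrightarrow> (\<exists>b. is_mp_inverse s a b)"

definition mp_inv :: "('a::ring_1 \<Rightarrow> 'a) \<Rightarrow> 'a \<Rightarrow> 'a" where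
  "mp_inv s a = (THE b. is_mp_inverse s a b)"

definition is_group_inverse :: "'a::ring_1 \<Rightarrow> 'a \<Rightarrow> bool" where
  "is_group_inverse a b \<longleftrightarrow> a * b * a = a \<and> b * a * b = b \<and> a * b = b * a"

definition group_invertible :: "'a::ring_1 \<Rightarrow> bool" where
  "group_invertible a \<longleftrightarrow> (\<exists>b. is_group_inverse a b)"

definition group_inv :: "'a::ring_1 \<Rightarrow> 'a" where
  "group_inv a = (THE b. is_group_inverse a b)"

definition projection :: "('a::ring_1 \<Rightarrow> 'a) \<Rightarrow> 'a \<Rightarrow> bool" where
  "projection s e \<longleftrightarrow> e * e = e \<and> e = s e"

definition SEP :: "('a::ring_1 \<Rightarrow> 'a) \<Rightarrow> 'a \<Rightarrow> bool" where
  "SEP s a \<longleftrightarrow> group_invertible a \<and> mp_invertible s a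
     \<and> s a = mp_inv s a \<and> mp_inv s a = group_inv a"

end

theory Submission
  imports Defs
begin

lemma mp_unique:
  assumes inv: "involution s" and b: "is_mp_inverse s a b" and c: "is_mp_inverse s a c"
  shows "b = c"
proof -
  have ss: "\<And>x. s (s x) = x" and sm: "\<And>x y. s (x * y) = s y * s x"
    using inv unfolding involution_def by auto
  from b have b1: "a*b*a = a" "b*a*b = b" "s (a*b) = a*b" "s (b*a) = b*a"
    unfolding is_mp_inverse_def by auto
  from c have c1: "a*c*a = a" "c*a*c = c" "s (a*c) = a*c" "s (c*a) = c*a"
    unfolding is_mp_inverse_def by auto
  have "b = b * s (a*b)" using b1 by (simp add: mult.assoc)
  also have "\<dots> = b * s b * s a" by (simp add: sm mult.assoc)
  also have "\<dots> = b * s b * s (a*c*a)" using c1 by simp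
  also have "\<dots> = b * (s b * s a) * (s c * s a)" by (simp add: sm mult.assoc)
  also have "\<dots> = b * s (a*b) * s (a*c)" by (simp add: sm)
  also have "\<dots> = b * a * c" using b1 c1 by (simp add: mult.assoc)
  finally have bb: "b = b*a*c" .
  have "c = s (c*a) * c" using c1 by (simp add: mult.assoc)
  also have "\<dots> = s a * s c * c" by (simp add: sm)
  also have "\<dots> = s (a*b*a) * s c * c" using b1 by simp
  also have "\<dots> = (s a * s b) * (s a * s c) * c" by (simp add: sm mult.assoc)
  also have "\<dots> = s (b*a) * s (c*a) * c" by (simp add: sm)
  also have "\<dots> = b * a * c" using b1 c1 by (simp add: mult.assoc)
  finally show ?thesis using bb by simp
qed

lemma mp_inv_prop:
  assumes "involution s" "mp_invertible s a"
  shows "is_mp_inverse s a (mp_inv s a)"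
proof -
  obtain b where b: "is_mp_inverse s a b" using assms(2) unfolding mp_invertible_def by auto
  have "(THE b. is_mp_inverse s a b) = b"
    using b mp_unique[OF assms(1) _ b] by (rule the_equality)
  then show ?thesis using b unfolding mp_inv_def by simp
qed

lemma gr_unique:
  assumes b: "is_group_inverse a b" and c: "is_group_inverse a c"
  shows "b = c"
proof -
  from b have b1: "a*b*a = a" "b*a*b = b" "a*b = b*a"
    unfolding is_group_inverse_def by auto
  from c have c1: "a*c*a = a" "c*a*c = c" "a*c = c*a"
    unfolding is_group_inverse_def by auto
  have abac: "a*b = a*c*(a*b)" using c1 by (metis mult.assoc)
  also have "\<dots> = c*a*(b*a)" using b1 c1 by simp
  also have "\<dots> = c*(a*b*a)" by (simp add: mult.assoc)
  finally have x1: "a*b = c*a" using b1 by simp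
  have "a*c = a*b*(a*c)" using b1 by (metis mult.assoc)
  also have "\<dots> = b*a*(c*a)" using b1 c1 by simp
  also have "\<dots> = b*(a*c*a)" by (simp add: mult.assoc)
  finally have x2: "a*c = b*a" using c1 by simp
  have "b = b*(a*b)" using b1 by (simp add: mult.assoc)
  also have "\<dots> = (b*a)*c" using x1 c1 by (simp add: mult.assoc)
  also have "\<dots> = c*a*c" using x2 c1 by (simp add: mult.assoc)
  finally show ?thesis using c1 by simp
qed

lemma gr_inv_prop:
  assumes "group_invertible a"
  shows "is_group_inverse a (group_inv a)"
proof -
  obtain b where b: "is_group_inverse a b" using assms unfolding group_invertible_def by auto
  have "(THE b. is_group_inverse a b) = b"
    using b gr_unique[OF _ b] by (rule the_equality)
  then show ?thesis using b unfolding group_inv_def by simp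
qed

theorem theorem2p1:
  fixes s :: "'a::ring_1 \<Rightarrow> 'a" and a :: 'a
  assumes "involution s"
    and "group_invertible a" and "mp_invertible s a"
  shows "SEP s a \<longleftrightarrow>
         projection s (a * s (group_inv a) * mp_inv s a * group_inv a)"
proof -
  have ss: "\<And>x. s (s x) = x" and sm: "\<And>x y. s (x * y) = s y * s x"
    using assms(1) unfolding involution_def by auto
  define g where "g = group_inv a"
  define m where "m = mp_inv s a"
  have G: "a*g*a = a" "g*a*g = g" "a*g = g*a"
    using gr_inv_prop[OF assms(2)] unfolding g_def is_group_inverse_def by auto
  have M: "a*m*a = a" "m*a*m = m" "s (a*m) = a*m" "s (m*a) = m*a"
    using mp_inv_prop[OF assms(1,3)] unfolding m_def is_mp_inverse_def by auto
  have aag: "a*a*g = a" using G by (metis mult.assoc)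
  have gaa: "g*a*a = a" using G by (metis mult.assoc)
  have gga: "g*g*a = g" using G by (metis mult.assoc)
  have gag: "g*a*g = g" using G by simp
  have agg: "a*g*g = g" using G by (metis mult.assoc)
  show ?thesis
  proof
    assume "SEP s a"
    then have sa: "s a = m" and mg: "m = g" unfolding SEP_def m_def g_def by auto
    have sg: "s g = a" using sa mg ss by metis
    have e: "a * s g * m * g = a*g"
      using sg mg aag by simp
    have "(a*g)*(a*g) = a*g" using G(1) by (metis mult.assoc)
    moreover have "s (a*g) = a*g" using M mg by simp
    ultimately show "projection s (a * s (group_inv a) * mp_inv s a * group_inv a)"
      using e unfolding projection_def g_def[symmetric] m_def[symmetric] by simp
  next
    assume "projection s (a * s (group_inv a) * mp_inv s a * group_inv a)"
    then have P: "(a * s g * m * g) * (a * s g * m * g) = a * s g * m * g"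
       "a * s g * m * g = s (a * s g * m * g)"
      unfolding projection_def g_def m_def by auto
    define e where "e = a * s g * m * g"
    have A1: "s a = s a * a * m"
    proof -
      have "s a = s ((a*m)*a)" using M by simp
      also have "\<dots> = s a * (a*m)" by (simp only: sm[of "a*m" a] M(3))
      finally show ?thesis by (simp add: mult.assoc)
    qed
    have A2: "s a = m * a * s a"
    proof -
      have "s a = s (a*(m*a))" using M by (simp add: mult.assoc)
      also have "\<dots> = (m*a) * s a" by (simp only: sm[of a "m*a"] M(4))
      finally show ?thesis .
    qed
    have S1: "s (a*g) * m * a = m * a"
    proof -
      have "s (a*g) * m * a = s (a*g) * s (m*a)" using M by (simp add: mult.assoc)
      also have "\<dots> = s (m*a*(a*g))" by (simp add: sm)
      also have "\<dots> = s (m*a)" using aag by (simp add: mult.assoc)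
      finally show ?thesis using M by simp
    qed
    have S2: "s (a*g) * m = m"
    proof -
      have "s (a*g) * m = s (a*g) * m * a * m" using M by (simp add: mult.assoc)
      also have "\<dots> = m" using S1 M by simp
      finally show ?thesis .
    qed
    have E1: "e * (a*a*s a*m) = a*m"
    proof -
      have "e * (a*a*s a*m) = a * s g * m * (g*a*a) * s a * m"
        unfolding e_def by (simp add: mult.assoc)
      also have "\<dots> = a * s g * (m * a * s a) * m" using gaa by (simp add: mult.assoc)
      also have "\<dots> = a * (s g * s a) * m" using A2 by (simp add: mult.assoc)
      also have "\<dots> = a * (s (a*g) * m)" by (simp add: sm mult.assoc)
      finally show ?thesis using S2 by simp
    qed
    have ee: "e*e = e" "s e = e" using P unfolding e_def by auto
    have E2: "e * (a*m) = a*m"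
    proof -
      have "e*(a*m) = e*e*(a*a*s a*m)" using E1 by (simp add: mult.assoc)
      thus ?thesis using ee E1 by simp
    qed
    have E3: "a*m*e = e" unfolding e_def using M by (metis mult.assoc)
    have E4: "e = a*m"
    proof -
      have "e = s (a*m*e)" using E3 ee by simp
      also have "\<dots> = e * (a*m)" using ee M by (simp add: sm)
      finally show ?thesis using E2 by simp
    qed
    have E5: "e*(a*g) = e" unfolding e_def using G(2) by (metis mult.assoc)
    have amg: "a*m = a*g"
    proof -
      have "a*m = a*m*(a*g)" using E4 E5 by simp
      thus ?thesis using M(1) by (metis mult.assoc)
    qed
    have hag: "s (a*g) = a*g" using amg M by simp
    have hga: "s (g*a) = g*a" using hag G by simp
    have "is_mp_inverse s a g" unfolding is_mp_inverse_def using G hag hga by simp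
    moreover have "is_mp_inverse s a m" unfolding is_mp_inverse_def using M by simp
    ultimately have mg: "m = g" using mp_unique[OF assms(1)] by blast
    have F1: "a * s g * g * g = a * g" using E4 mg unfolding e_def by simp
    have F2: "a = a * s g * g"
    proof -
      have "a * s g * g * g * a = a * g * a" using F1 by simp
      thus ?thesis using G gga by (simp add: mult.assoc)
    qed
    have F3: "s g = a * g * s g"
    proof -
      have "s g = s (g * (a*g))" using G by (simp add: mult.assoc)
      also have "\<dots> = s (a*g) * s g" by (simp add: sm)
      finally show ?thesis using hag by simp
    qed
    have F4: "g*a = s g * g"
    proof -
      have "g*a = g*a*s g*g" using F2 by (metis mult.assoc)
      also have "\<dots> = a*g*s g*g" using G by simp
      finally show ?thesis using F3 by simp
    qed
    have F5: "s g = s g * (g*a)"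
    proof -
      have "s g = s ((g*a)*g)" using G by simp
      also have "\<dots> = s g * s (g*a)" by (simp add: sm)
      finally show ?thesis using hga by simp
    qed
    have "s g = g*a*a" using F5 F4 by (simp add: mult.assoc)
    then have sg: "s g = a" using gaa by simp
    have sa: "s a = g" using sg ss by metis
    show "SEP s a" unfolding SEP_def using assms(2,3) sa mg
      unfolding m_def g_def by simp
  qed
qed

end
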